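(* Let $\mathcal{G}$ be an $A$-compatible P-graph satisfying condition ( * ) below. Let $k\in\{1,\dots,d+1\}$, $\widetilde B\in\mathcal{B}^k$, $\ell\in\{1,\dots,m+1\}\setminus\widetilde B$, $B=\widetilde B\cup\{\ell\}$, and $\zeta\in\Theta_\mathcal{G}(F,B)$. Then: (i) for every $r\in\{1,\dots,d\}$ and $i\in B$, any directed path from $j_r$ to $i$ in $\zeta$ contains no edge of $\mathcal{E}^-$. (ii) If $\zeta'\in\Theta_\mathcal{G}(B)$ is such that for all $r=1,\dots,d$ the connected component of $\zeta'$ containing $j_r$ has root $g_\zeta(j_r)$, then the connected component of $\zeta'$ containing $m+1$ has root $g_\zeta(m+1)$; in particular $\zeta'\in\Theta_\mathcal{G}(F,B)$. Condition ( * ): for every $\ell'\in\{1,\dots,m\}$ and $i\in\{1,\dots,d\}$, every directed path in $\mathcal{G}$ from $j_i$ to $\ell'$ that contains an edge in $\mathcal{E}^-$ goes through $m+1$.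
   Context: $R$ is a partially ordered commutative ring. Let $d\ge0$, $m_0,\dots,m_d\ge0$ with $m=m_0+\cdots+m_d$. $A\in R^{m\times m}$, $b\in R^m$: for $i=1,\dots,d$ the rows indexed by $\mathcal{N}_i=\{1+\sum_{j<i}m_j,\dots,\sum_{j\le i}m_j\}$ are zero outside the columns indexed by $\mathcal{N}_i$, where they form a square $A_i$, and the corresponding subvector $b^i$ has at most one nonzero entry; the last $m_0$ rows form an arbitrary $A_0\in R^{m_0\times m}$ with arbitrary $b^0$. $\mathcal{N}=\{1,\dots,m+1\}$, $\mathcal{N}_0=\{m-m_0+1,\dots,m+1\}$, $\mathcal{N}_{d+1}=\{m+1\}$. Fixed $j_i\in\mathcal{N}_i$ with $b_j=0$ for all $j\le m-m_0$, $j\notin\{j_1,\dots,j_d\}$; $F=\{j_1,\dots,j_d,m+1\}$. $\mathcal{B}^k=\{\{w_j:j\in\{1,\dots,d+1\}\setminus\{k\}\}: w_j\in\mathcal{N}_j\}$. A multidigraph $\mathcal{G}=(\mathcal{N},\mathcal{E})$ has source/target maps $s,t$, no self-loops, labeling $\pi\colon\mathcal{E}\to R$, Laplacian $L_{ij}=\sum_{e:s(e)=j,t(e)=i}\pi(e)$ ($i\ne j$), $L_{ii}=-\sum_{k\ne i}L_{ki}$. $\mathcal{G}$ is $A$-compatible if (i) no edge goes from a node in $\mathcal{N}_i$ ($i\ge0$) to a node in $\mathcal{N}_j$ with $i\ne j$, $j\ge1$; (ii) for $\ell\notin F$ the $\ell$-th row of $L$ equals the $\ell$-th row of $(A\,|\,b)$.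 Trees/forests: subgraphs with acyclic underlying undirected graph (connected for trees), rooted at $N$ if $N$ is the only node without outgoing edges; spanning means node set $\mathcal{N}$; forests are identified with edge sets. $\Theta_\mathcal{G}(B)$: spanning forests with $|B|$ components, each a tree rooted at a node of $B$; $\Theta_\mathcal{G}(F,B)$ ($|F|=|B|$): those of them in which moreover each component contains a node of $F$. For $\zeta\in\Theta_\mathcal{G}(F,B)$, $g_\zeta\colon F\to B$ maps $i$ to the root of the tree of $\zeta$ containing $i$. A cycle is a closed directed path with no repeated nodes. $\mathcal{E}^-=\{e:\pi(e)\in R_{<0}\}$, $\mathcal{E}^+=\{e:\pi(e)\in R_{>0}\}$. $\mathcal{G}$ is a P-graph if there is $\mu\colon\mathcal{E}^-\to\mathcal{P}(\mathcal{E}^+)$ with (i) $\mathcal{E}=\mathcal{E}^+\sqcup\mathcal{E}^-$; (ii) every cycle contains at most one edge of $\mathcal{E}^-$; (iii) for $e\in\mathcal{E}^-$: (a) $e'\in\mu(e)\Rightarrow s(e')=s(e)$; (b) $e'\in\mu(e)\Rightarrow$ every cycle containing $e'$ contains $t(e)$; (c) $\mu(e)\cap\mu(e')=\emptyset$ for $e\ne e'$; (iv) $\pi(e)+\sum_{e'\in\mu(e)}\pi(e')\in R_{\ge0}$ for all $e\in\mathcal{E}^-$. *)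

theory Defs
  imports Main
begin

text \<open>Nodes are 1..m+1 with m = m_0 + ... + m_d. Blocks N_1..N_d occupy the first
  m - m_0 indices, N_0 = {m - m_0 + 1 .. m+1}, N_{d+1} = {m+1}.\<close>

definition msum :: "nat \<Rightarrow> (nat \<Rightarrow> nat) \<Rightarrow> nat" where
  "msum d mm = (\<Sum>j\<le>d. mm j)"

definition blk :: "nat \<Rightarrow> (nat \<Rightarrow> nat) \<Rightarrow> nat \<Rightarrow> nat set" where
  "blk d mm i =
     (if i = 0 then {(\<Sum>j\<in>{1..d}. mm j) + 1 .. msum d mm + 1}
      else if i \<le> d then {1 + (\<Sum>j\<in>{1..<i}. mm j) .. (\<Sum>j\<in>{1..i}. mm j)}
      else if i = d + 1 then {msum d mm + 1}
      else {})"

definition Bset :: "nat \<Rightarrow> (nat \<Rightarrow> nat) \<Rightarrow> nat \<Rightarrow> nat set set" where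
  "Bset d mm k = {w ` ({1..d+1} - {k}) | w. \<forall>j\<in>{1..d+1} - {k}. w j \<in> blk d mm j}"

definition multidigraph :: "nat set \<Rightarrow> 'e set \<Rightarrow> ('e \<Rightarrow> nat) \<Rightarrow> ('e \<Rightarrow> nat) \<Rightarrow> bool" where
  "multidigraph V E s t \<longleftrightarrow> finite E \<and> (\<forall>e\<in>E. s e \<in> V \<and> t e \<in> V \<and> s e \<noteq> t e)"

definition lap_off :: "'e set \<Rightarrow> ('e \<Rightarrow> nat) \<Rightarrow> ('e \<Rightarrow> nat) \<Rightarrow> ('e \<Rightarrow> 'a::comm_ring) \<Rightarrow> nat \<Rightarrow> nat \<Rightarrow> 'a" where
  "lap_off E s t \<pi> i j = (\<Sum>e\<in>{e\<in>E. s e = j \<and> t e = i}. \<pi> e)"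

definition lap :: "nat set \<Rightarrow> 'e set \<Rightarrow> ('e \<Rightarrow> nat) \<Rightarrow> ('e \<Rightarrow> nat) \<Rightarrow> ('e \<Rightarrow> 'a::comm_ring) \<Rightarrow> nat \<Rightarrow> nat \<Rightarrow> 'a" where
  "lap V E s t \<pi> i j =
     (if i \<noteq> j then lap_off E s t \<pi> i j else - (\<Sum>k\<in>V - {i}. lap_off E s t \<pi> k i))"

definition augm :: "nat \<Rightarrow> (nat \<Rightarrow> nat \<Rightarrow> 'a) \<Rightarrow> (nat \<Rightarrow> 'a) \<Rightarrow> nat \<Rightarrow> nat \<Rightarrow> 'a" where
  "augm m A b l j = (if j = m + 1 then b l else A l j)"

definition Fset :: "nat \<Rightarrow> (nat \<Rightarrow> nat) \<Rightarrow> (nat \<Rightarrow> nat) \<Rightarrow> nat set" where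
  "Fset d mm jj = jj ` {1..d} \<union> {msum d mm + 1}"

definition A_compatible ::
  "nat \<Rightarrow> (nat \<Rightarrow> nat) \<Rightarrow> (nat \<Rightarrow> nat \<Rightarrow> 'a::comm_ring) \<Rightarrow> (nat \<Rightarrow> 'a) \<Rightarrow> (nat \<Rightarrow> nat)
   \<Rightarrow> 'e set \<Rightarrow> ('e \<Rightarrow> nat) \<Rightarrow> ('e \<Rightarrow> nat) \<Rightarrow> ('e \<Rightarrow> 'a) \<Rightarrow> bool" where
  "A_compatible d mm A b jj E s t \<pi> \<longleftrightarrow>
     (\<forall>e\<in>E. \<forall>i\<in>{0..d}. \<forall>j\<in>{1..d}. i \<noteq> j \<longrightarrow> \<not> (s e \<in> blk d mm i \<and> t e \<in> blk d mm j)) \<and>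
     (\<forall>l\<in>{1..msum d mm + 1} - Fset d mm jj. \<forall>j\<in>{1..msum d mm + 1}.
        lap {1..msum d mm + 1} E s t \<pi> l j = augm (msum d mm) A b l j)"

definition chain :: "('e \<Rightarrow> nat) \<Rightarrow> ('e \<Rightarrow> nat) \<Rightarrow> 'e list \<Rightarrow> bool" where
  "chain s t es \<longleftrightarrow> (\<forall>k. Suc k < length es \<longrightarrow> t (es ! k) = s (es ! Suc k))"

definition dpath :: "('e \<Rightarrow> nat) \<Rightarrow> ('e \<Rightarrow> nat) \<Rightarrow> 'e set \<Rightarrow> nat \<Rightarrow> 'e list \<Rightarrow> nat \<Rightarrow> bool" where
  "dpath s t S u es v \<longleftrightarrow> set es \<subseteq> S \<and> chain s t es \<and> distinct (u # map t es) \<and>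
     (if es = [] then u = v else s (hd es) = u \<and> t (last es) = v)"

definition dcycle :: "('e \<Rightarrow> nat) \<Rightarrow> ('e \<Rightarrow> nat) \<Rightarrow> 'e set \<Rightarrow> 'e list \<Rightarrow> bool" where
  "dcycle s t S es \<longleftrightarrow> es \<noteq> [] \<and> set es \<subseteq> S \<and> chain s t es \<and>
     t (last es) = s (hd es) \<and> distinct (map s es)"

definition Eneg :: "'e set \<Rightarrow> ('e \<Rightarrow> 'a::ordered_comm_ring) \<Rightarrow> 'e set" where
  "Eneg E \<pi> = {e\<in>E. \<pi> e < 0}"

definition Epos :: "'e set \<Rightarrow> ('e \<Rightarrow> 'a::ordered_comm_ring) \<Rightarrow> 'e set" where
  "Epos E \<pi> = {e\<in>E. \<pi> e > 0}"

definition P_graph :: "'e set \<Rightarrow> ('e \<Rightarrow> nat) \<Rightarrow> ('e \<Rightarrow> nat) \<Rightarrow> ('e \<Rightarrow> 'a::ordered_comm_ring) \<Rightarrow> bool" where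
  "P_graph E s t \<pi> \<longleftrightarrow> (\<exists>\<mu> :: 'e \<Rightarrow> 'e set.
     E = Epos E \<pi> \<union> Eneg E \<pi> \<and>
     (\<forall>es. dcycle s t E es \<longrightarrow> card (set es \<inter> Eneg E \<pi>) \<le> 1) \<and>
     (\<forall>e\<in>Eneg E \<pi>.
        \<mu> e \<subseteq> Epos E \<pi> \<and>
        (\<forall>e'\<in>\<mu> e. s e' = s e) \<and>
        (\<forall>e'\<in>\<mu> e. \<forall>es. dcycle s t E es \<and> e' \<in> set es \<longrightarrow> t e \<in> set (map s es)) \<and>
        (\<forall>e''\<in>Eneg E \<pi>. e'' \<noteq> e \<longrightarrow> \<mu> e \<inter> \<mu> e'' = {}) \<and>
        \<pi> e + (\<Sum>e'\<in>\<mu> e. \<pi> e') \<ge> 0))"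

definition ucycle :: "('e \<Rightarrow> nat) \<Rightarrow> ('e \<Rightarrow> nat) \<Rightarrow> 'e set \<Rightarrow> 'e list \<Rightarrow> nat list \<Rightarrow> bool" where
  "ucycle s t S es vs \<longleftrightarrow> es \<noteq> [] \<and> length vs = length es \<and> distinct es \<and> distinct vs \<and>
     set es \<subseteq> S \<and>
     (\<forall>k<length es. {s (es ! k), t (es ! k)} = {vs ! k, vs ! ((k + 1) mod length es)})"

definition uacyclic :: "('e \<Rightarrow> nat) \<Rightarrow> ('e \<Rightarrow> nat) \<Rightarrow> 'e set \<Rightarrow> bool" where
  "uacyclic s t S \<longleftrightarrow> \<not> (\<exists>es vs. ucycle s t S es vs)"

definition uedges :: "('e \<Rightarrow> nat) \<Rightarrow> ('e \<Rightarrow> nat) \<Rightarrow> 'e set \<Rightarrow> (nat \<times> nat) set" where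
  "uedges s t S = {(s e, t e) | e. e \<in> S} \<union> {(t e, s e) | e. e \<in> S}"

definition comp :: "nat set \<Rightarrow> ('e \<Rightarrow> nat) \<Rightarrow> ('e \<Rightarrow> nat) \<Rightarrow> 'e set \<Rightarrow> nat \<Rightarrow> nat set" where
  "comp V s t S u = {v\<in>V. (u, v) \<in> (uedges s t S)\<^sup>*}"

definition components :: "nat set \<Rightarrow> ('e \<Rightarrow> nat) \<Rightarrow> ('e \<Rightarrow> nat) \<Rightarrow> 'e set \<Rightarrow> nat set set" where
  "components V s t S = comp V s t S ` V"

definition noout :: "('e \<Rightarrow> nat) \<Rightarrow> 'e set \<Rightarrow> nat \<Rightarrow> bool" where
  "noout s S r \<longleftrightarrow> \<not> (\<exists>e\<in>S. s e = r)"

definition Theta :: "nat set \<Rightarrow> 'e set \<Rightarrow> ('e \<Rightarrow> nat) \<Rightarrow> ('e \<Rightarrow> nat) \<Rightarrow> nat set \<Rightarrow> 'e set set" where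
  "Theta V E s t B = {\<zeta>. \<zeta> \<subseteq> E \<and> uacyclic s t \<zeta> \<and>
     card (components V s t \<zeta>) = card B \<and>
     (\<forall>C\<in>components V s t \<zeta>. \<exists>r\<in>B \<inter> C. \<forall>v\<in>C. noout s \<zeta> v \<longleftrightarrow> v = r)}"

definition ThetaF :: "nat set \<Rightarrow> 'e set \<Rightarrow> ('e \<Rightarrow> nat) \<Rightarrow> ('e \<Rightarrow> nat) \<Rightarrow> nat set \<Rightarrow> nat set \<Rightarrow> 'e set set" where
  "ThetaF V E s t F B = {\<zeta>\<in>Theta V E s t B. \<forall>C\<in>components V s t \<zeta>. C \<inter> F \<noteq> {}}"

definition groot :: "nat set \<Rightarrow> ('e \<Rightarrow> nat) \<Rightarrow> ('e \<Rightarrow> nat) \<Rightarrow> 'e set \<Rightarrow> nat \<Rightarrow> nat" where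
  "groot V s t S i = (THE r. r \<in> comp V s t S i \<and> noout s S r)"

end

theory Submission
  imports Defs
begin
lemma uedges_sym: "(x,y) \<in> uedges s t S \<Longrightarrow> (y,x) \<in> uedges s t S"
  unfolding uedges_def by blast

lemma rtrancl_uedges_sym: "(x,y) \<in> (uedges s t S)\<^sup>* \<Longrightarrow> (y,x) \<in> (uedges s t S)\<^sup>*"
proof (induction rule: rtrancl_induct)
  case base then show ?case by simp
next
  case (step y z) then show ?case by (meson converse_rtrancl_into_rtrancl uedges_sym)
qed

lemma comp_eq: "y \<in> comp V s t S x \<Longrightarrow> comp V s t S y = comp V s t S x"
proof -
  assume "y \<in> comp V s t S x"
  then have xy: "(x,y) \<in> (uedges s t S)\<^sup>*" by (simp add: comp_def)
  then have yx: "(y,x) \<in> (uedges s t S)\<^sup>*" by (rule rtrancl_uedges_sym)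
  have "\<And>v. (y,v) \<in> (uedges s t S)\<^sup>* \<longleftrightarrow> (x,v) \<in> (uedges s t S)\<^sup>*"
    using xy yx rtrancl_trans by metis
  then show ?thesis by (simp add: comp_def)
qed

lemma comp_self: "x \<in> V \<Longrightarrow> x \<in> comp V s t S x" by (simp add: comp_def)

lemma comp_edge: "y \<in> comp V s t S x \<Longrightarrow> e \<in> S \<Longrightarrow> s e = y \<Longrightarrow> t e \<in> V \<Longrightarrow> t e \<in> comp V s t S x"
proof -
  assume a: "y \<in> comp V s t S x" "e \<in> S" "s e = y" "t e \<in> V"
  have "(y, t e) \<in> uedges s t S" using a unfolding uedges_def by blast
  then show ?thesis using a unfolding comp_def by (auto intro: rtrancl_into_rtrancl)
qed

lemma comp_of_mem: "C \<in> components V s t S \<Longrightarrow> z \<in> C \<Longrightarrow> comp V s t S z = C"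
  unfolding components_def using comp_eq by blast

lemma components_meet: "C1 \<in> components V s t S \<Longrightarrow> C2 \<in> components V s t S \<Longrightarrow> z \<in> C1 \<Longrightarrow> z \<in> C2 \<Longrightarrow> C1 = C2"
  using comp_of_mem by metis

lemma Theta_root:
  assumes "\<zeta> \<in> Theta V E s t B" "x \<in> V"
  shows "groot V s t \<zeta> x \<in> comp V s t \<zeta> x \<and> noout s \<zeta> (groot V s t \<zeta> x) \<and> groot V s t \<zeta> x \<in> B
        \<and> (\<forall>w\<in>comp V s t \<zeta> x. noout s \<zeta> w \<longleftrightarrow> w = groot V s t \<zeta> x)"
proof -
  have "comp V s t \<zeta> x \<in> components V s t \<zeta>" using assms(2) by (simp add: components_def)
  then obtain r where r: "r \<in> B \<inter> comp V s t \<zeta> x" "\<forall>v\<in>comp V s t \<zeta> x. noout s \<zeta> v \<longleftrightarrow> v = r"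
    using assms(1) unfolding Theta_def by blast
  have "groot V s t \<zeta> x = r" unfolding groot_def
    by (rule the_equality) (use r in auto)
  then show ?thesis using r by auto
qed

lemma Theta_B_noout:
  assumes "\<zeta> \<in> Theta V E s t B" "finite V" "finite B" "b \<in> B"
  shows "b \<in> V \<and> noout s \<zeta> b"
proof -
  let ?K = "components V s t \<zeta>"
  have ex: "\<forall>C\<in>?K. \<exists>r. r \<in> B \<inter> C \<and> (\<forall>v\<in>C. noout s \<zeta> v \<longleftrightarrow> v = r)"
    using assms(1) unfolding Theta_def by blast
  then obtain \<rho> where \<rho>: "\<forall>C\<in>?K. \<rho> C \<in> B \<inter> C \<and> (\<forall>v\<in>C. noout s \<zeta> v \<longleftrightarrow> v = \<rho> C)"
    by metis
  have inj: "inj_on \<rho> ?K"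
  proof (rule inj_onI)
    fix x y assume xy: "x \<in> ?K" "y \<in> ?K" "\<rho> x = \<rho> y"
    then have "\<rho> x \<in> x" "\<rho> x \<in> y" using \<rho> by auto
    then show "x = y" using components_meet[OF xy(1,2)] by blast
  qed
  have "card (\<rho> ` ?K) = card B" using card_image[OF inj] assms(1) by (simp add: Theta_def)
  moreover have "\<rho> ` ?K \<subseteq> B" using \<rho> by auto
  ultimately have "\<rho> ` ?K = B" using assms(3) by (simp add: card_subset_eq)
  then obtain C where C: "C \<in> ?K" "b = \<rho> C" using assms(4) by auto
  moreover have "C \<subseteq> V" using C(1) by (auto simp: components_def comp_def)
  ultimately show ?thesis using \<rho> by auto
qed

lemma Theta_groot_B:
  assumes "\<zeta> \<in> Theta V E s t B" "finite V" "finite B" "b \<in> B"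
  shows "groot V s t \<zeta> b = b"
proof -
  have b: "b \<in> V" "noout s \<zeta> b" using Theta_B_noout[OF assms] by auto
  show ?thesis using Theta_root[OF assms(1) b(1)] comp_self[OF b(1)] b(2) by metis
qed

lemma ThetaF_distinct:
  assumes "\<zeta> \<in> ThetaF V E s t F B" "finite V" "finite F" "card F = card B" "f1 \<in> F" "f2 \<in> F"
     "comp V s t \<zeta> f1 = comp V s t \<zeta> f2"
  shows "f1 = f2"
proof -
  let ?K = "components V s t \<zeta>"
  have hit: "\<forall>C\<in>?K. \<exists>f. f \<in> C \<inter> F" using assms(1) unfolding ThetaF_def by blast
  then obtain g where g: "\<forall>C\<in>?K. g C \<in> C \<inter> F" by metis
  have inj: "inj_on g ?K"
  proof (rule inj_onI)
    fix x y assume xy: "x \<in> ?K" "y \<in> ?K" "g x = g y"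
    then have "g x \<in> x" "g x \<in> y" using g by auto
    then show "x = y" using components_meet[OF xy(1,2)] by blast
  qed
  have "card (g ` ?K) = card F" using card_image[OF inj] assms(1,4) by (simp add: ThetaF_def Theta_def)
  moreover have "g ` ?K \<subseteq> F" using g by auto
  ultimately have gK: "g ` ?K = F" using assms(3) by (simp add: card_subset_eq)
  obtain C1 where C1: "C1 \<in> ?K" "f1 = g C1" using gK assms(5) by auto
  obtain C2 where C2: "C2 \<in> ?K" "f2 = g C2" using gK assms(6) by auto
  have "comp V s t \<zeta> f1 = C1" using comp_of_mem C1 g by blast
  moreover have "comp V s t \<zeta> f2 = C2" using comp_of_mem C2 g by blast
  ultimately show ?thesis using C1 C2 assms(7) by simp
qed

lemma periodic_point:
  assumes "finite X" "x0 \<in> X" "\<forall>x\<in>X. f x \<in> X"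
  shows "\<exists>y\<in>X. \<exists>n>0. (f^^n) y = y"
proof -
  have fx: "(f^^i) x0 \<in> X" for i by (induction i) (auto simp: assms)
  have "\<not> inj_on (\<lambda>i. (f^^i) x0) {0..card X}"
  proof
    assume inj: "inj_on (\<lambda>i. (f^^i) x0) {0..card X}"
    then have "card ((\<lambda>i. (f^^i) x0) ` {0..card X}) = card X + 1" by (simp add: card_image)
    moreover have "(\<lambda>i. (f^^i) x0) ` {0..card X} \<subseteq> X" using fx by auto
    ultimately have "card X + 1 \<le> card X" using card_mono[OF assms(1)] by metis
    then show False by simp
  qed
  then obtain a b where ab: "a \<noteq> b" "(f^^a) x0 = (f^^b) x0" unfolding inj_on_def by blast
  then obtain a b where ab: "a < b" "(f^^a) x0 = (f^^b) x0"
    by (metis linorder_neqE_nat)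
  have "(f^^(b-a)) ((f^^a) x0) = (f^^(b-a+a)) x0" by (simp add: funpow_add)
  also have "\<dots> = (f^^a) x0" using ab by simp
  finally show ?thesis using ab(1) fx[of a] by (intro bexI[of _ "(f^^a) x0"] exI[of _ "b-a"]) auto
qed

lemma ucycle_from_succ:
  assumes "finite X" "X \<noteq> {}" "\<forall>x\<in>X. \<exists>e\<in>S. s e = x \<and> t e \<in> X"
  shows "\<exists>es vs. ucycle s t S es vs"
proof -
  obtain g where g: "\<forall>x\<in>X. g x \<in> S \<and> s (g x) = x \<and> t (g x) \<in> X" using assms(3) by metis
  define f where "f x = t (g x)" for x
  obtain x0 where x0: "x0 \<in> X" using assms(2) by auto
  have fX: "\<forall>x\<in>X. f x \<in> X" using g f_def by auto
  obtain y n where y: "y \<in> X" "n > 0" "(f^^n) y = y" using periodic_point[OF assms(1) x0 fX] by blast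
  define n0 where "n0 = (LEAST n. n > 0 \<and> (f^^n) y = y)"
  have n0: "n0 > 0" "(f^^n0) y = y"
    using LeastI[of "\<lambda>n. n>0 \<and> (f^^n) y = y" n] y unfolding n0_def by auto
  have min: "\<And>m. 0 < m \<Longrightarrow> m < n0 \<Longrightarrow> (f^^m) y \<noteq> y" using not_less_Least n0_def by blast
  have fy: "(f^^i) y \<in> X" for i by (induction i) (use y fX in auto)
  define vs where "vs = map (\<lambda>i. (f^^i) y) [0..<n0]"
  define es where "es = map (\<lambda>i. g ((f^^i) y)) [0..<n0]"
  have injv: "inj_on (\<lambda>i. (f^^i) y) {0..<n0}"
  proof (rule inj_onI, rule ccontr)
    fix i j assume ij: "i \<in> {0..<n0}" "j \<in> {0..<n0}" "(f^^i) y = (f^^j) y" "i \<noteq> j"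
    have gen: "\<And>i j. i < j \<Longrightarrow> j < n0 \<Longrightarrow> (f^^i) y = (f^^j) y \<Longrightarrow> False"
    proof -
      fix i j assume a: "i < j" "j < n0" "(f^^i) y = (f^^j) y"
      have "(f^^(n0 - j + i)) y = (f^^(n0-j)) ((f^^i) y)" by (simp add: funpow_add)
      also have "\<dots> = (f^^(n0-j)) ((f^^j) y)" using a by simp
      also have "\<dots> = (f^^(n0-j+j)) y" by (simp add: funpow_add)
      also have "\<dots> = y" using a n0 by simp
      finally have e: "(f^^(n0 - j + i)) y = y" .
      have "0 < n0 - j + i" "n0 - j + i < n0" using a by auto
      from min[OF this] e show False by simp
    qed
    have "i < n0" "j < n0" using ij(1,2) by auto
    show False
    proof (cases "i < j")
      case True from gen[OF True \<open>j < n0\<close> ij(3)] show False .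
    next
      case False then have "j < i" using ij(4) by simp
      then show False using gen[OF _ \<open>i < n0\<close>] ij(3) by metis
    qed
  qed
  have dv: "distinct vs" unfolding vs_def by (simp add: distinct_map injv)
  have "map s es = vs" unfolding es_def vs_def using g fy by simp
  then have de: "distinct es" using dv by (metis distinct_map)
  have "ucycle s t S es vs"
    unfolding ucycle_def
  proof (intro conjI allI impI)
    show "es \<noteq> []" using n0 es_def by simp
    show "length vs = length es" by (simp add: vs_def es_def)
    show "distinct es" by fact
    show "distinct vs" by fact
    show "set es \<subseteq> S" using g fy by (auto simp: es_def)
    fix k assume k: "k < length es"
    then have kn: "k < n0" by (simp add: es_def)
    have e: "es ! k = g ((f^^k) y)" using kn by (simp add: es_def)
    have se: "s (es ! k) = vs ! k" using e g fy kn by (simp add: vs_def)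
    have te: "t (es ! k) = (f^^(Suc k)) y" using e by (simp add: f_def)
    have "vs ! ((k + 1) mod length es) = (f^^(Suc k)) y"
    proof (cases "Suc k < n0")
      case True then show ?thesis by (simp add: vs_def es_def)
    next
      case False then have "Suc k = n0" using kn by simp
      then show ?thesis using n0 by (simp add: vs_def es_def)
    qed
    then show "{s (es ! k), t (es ! k)} = {vs ! k, vs ! ((k + 1) mod length es)}" using se te by simp
  qed
  then show ?thesis by blast
qed

lemma root_closed:
  assumes "\<xi> \<in> Theta V E s t B" "finite V" "x0 \<in> V" "x0 \<in> Y"
    "\<And>e. e \<in> \<xi> \<Longrightarrow> s e \<in> Y \<Longrightarrow> t e \<in> Y \<and> t e \<in> V"
  shows "groot V s t \<xi> x0 \<in> Y"
proof (rule ccontr)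
  let ?r = "groot V s t \<xi> x0"
  assume nr: "?r \<notin> Y"
  let ?X = "comp V s t \<xi> x0 \<inter> Y"
  have R: "\<forall>w\<in>comp V s t \<xi> x0. noout s \<xi> w \<longleftrightarrow> w = ?r" using Theta_root[OF assms(1,3)] by blast
  have fin: "finite ?X" using assms(2) by (auto simp: comp_def)
  have ne: "?X \<noteq> {}" using assms(3,4) comp_self by fast
  have "\<forall>x\<in>?X. \<exists>e\<in>\<xi>. s e = x \<and> t e \<in> ?X"
  proof
    fix x assume x: "x \<in> ?X"
    then have "\<not> noout s \<xi> x" using R nr by auto
    then obtain e where e: "e \<in> \<xi>" "s e = x" unfolding noout_def by blast
    have "t e \<in> Y" "t e \<in> V" using assms(5)[OF e(1)] e x by auto
    then have "t e \<in> ?X" using comp_edge[of x V s t \<xi> x0 e] x e by auto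
    then show "\<exists>e\<in>\<xi>. s e = x \<and> t e \<in> ?X" using e by blast
  qed
  then obtain es vs where "ucycle s t \<xi> es vs" using ucycle_from_succ[OF fin ne] by blast
  then show False using assms(1) unfolding Theta_def uacyclic_def by blast
qed

lemma dpath_comp:
  assumes "dpath s t S u es v" "u \<in> V" "\<forall>e\<in>S. t e \<in> V"
  shows "set (u # map t es) \<subseteq> comp V s t S u"
proof -
  have sub: "set es \<subseteq> S" and ch: "chain s t es"
    and hd: "es \<noteq> [] \<Longrightarrow> s (hd es) = u" using assms(1) unfolding dpath_def by (auto split: if_splits)
  have "k < length es \<Longrightarrow> t (es ! k) \<in> comp V s t S u" for k
  proof (induction k)
    case 0
    then have "es ! 0 \<in> S" "s (es ! 0) = u" using sub hd by (auto simp: hd_conv_nth)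
    then show ?case using comp_edge[of u V s t S u "es ! 0"] comp_self[OF assms(2)] assms(3) by blast
  next
    case (Suc k)
    then have "t (es ! k) \<in> comp V s t S u" by simp
    moreover have "t (es ! k) = s (es ! Suc k)" using ch Suc.prems unfolding chain_def by blast
    moreover have "es ! Suc k \<in> S" using sub Suc.prems by auto
    ultimately show ?case using comp_edge[of "t (es ! k)" V s t S u "es ! Suc k"] assms(3) by metis
  qed
  then show ?thesis using comp_self[OF assms(2)] by (auto simp: in_set_conv_nth)
qed

theorem lemma5p2:
  fixes d :: nat and mm :: "nat \<Rightarrow> nat"
    and A :: "nat \<Rightarrow> nat \<Rightarrow> 'a::ordered_comm_ring" and b :: "nat \<Rightarrow> 'a"
    and jj :: "nat \<Rightarrow> nat"
    and E :: "'e set" and s t :: "'e \<Rightarrow> nat" and \<pi> :: "'e \<Rightarrow> 'a"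
    and k l :: nat and Bt :: "nat set" and \<zeta> :: "'e set"
  assumes blockA: "\<forall>i\<in>{1..d}. \<forall>r\<in>blk d mm i. \<forall>c\<in>{1..msum d mm} - blk d mm i. A r c = 0"
    and blockb: "\<forall>i\<in>{1..d}. card {r\<in>blk d mm i. b r \<noteq> 0} \<le> 1"
    and jj_in: "\<forall>i\<in>{1..d}. jj i \<in> blk d mm i"
    and b_zero: "\<forall>j\<in>{1..msum d mm - mm 0}. j \<notin> jj ` {1..d} \<longrightarrow> b j = 0"
    and graph: "multidigraph {1..msum d mm + 1} E s t"
    and compat: "A_compatible d mm A b jj E s t \<pi>"
    and pg: "P_graph E s t \<pi>"
    and star: "\<forall>l'\<in>{1..msum d mm}. \<forall>i\<in>{1..d}. \<forall>es.
                 dpath s t E (jj i) es l' \<and> set es \<inter> Eneg E \<pi> \<noteq> {}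
                 \<longrightarrow> msum d mm + 1 \<in> set (jj i # map t es)"
    and k: "k \<in> {1..d+1}"
    and Bt: "Bt \<in> Bset d mm k"
    and l: "l \<in> {1..msum d mm + 1} - Bt"
    and zeta: "\<zeta> \<in> ThetaF {1..msum d mm + 1} E s t (Fset d mm jj) (insert l Bt)"
  shows "(\<forall>r\<in>{1..d}. \<forall>i\<in>insert l Bt. \<forall>es.
            dpath s t \<zeta> (jj r) es i \<longrightarrow> set es \<inter> Eneg E \<pi> = {})
       \<and> (\<forall>\<zeta>'\<in>Theta {1..msum d mm + 1} E s t (insert l Bt).
            (\<forall>r\<in>{1..d}. groot {1..msum d mm + 1} s t \<zeta>' (jj r) = groot {1..msum d mm + 1} s t \<zeta> (jj r))
            \<longrightarrow> groot {1..msum d mm + 1} s t \<zeta>' (msum d mm + 1) = groot {1..msum d mm + 1} s t \<zeta> (msum d mm + 1)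
                \<and> \<zeta>' \<in> ThetaF {1..msum d mm + 1} E s t (Fset d mm jj) (insert l Bt))"
proof -
  let ?n = "msum d mm"
  let ?V = "{1..?n+1}"
  let ?F = "Fset d mm jj"
  let ?B = "insert l Bt"
  let ?S = "\<lambda>j. \<Sum>i\<in>{1..j}. mm i"
  have Smono: "\<And>i j. i \<le> j \<Longrightarrow> ?S i \<le> ?S j" by (rule sum_mono2) auto
  have Sd: "?S d \<le> ?n" unfolding msum_def by (rule sum_mono2) auto
  have blkj: "\<And>j. j \<in> {1..d} \<Longrightarrow> blk d mm j = {1 + (\<Sum>i\<in>{1..<j}. mm i) .. ?S j}"
    by (auto simp: blk_def)
  have blk0: "blk d mm 0 = {?S d + 1 .. ?n+1}" by (simp add: blk_def)
  have blkd1: "blk d mm (d+1) = {?n+1}" by (simp add: blk_def)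
  have blkj_le: "\<And>j x. j \<in> {1..d} \<Longrightarrow> x \<in> blk d mm j \<Longrightarrow> 1 \<le> x \<and> x \<le> ?S d"
  proof -
    fix j x assume j: "j \<in> {1..d}" and x: "x \<in> blk d mm j"
    then have "1 \<le> x" "x \<le> ?S j" using blkj by auto
    then show "1 \<le> x \<and> x \<le> ?S d" using Smono[of j d] j by auto
  qed
  have blk_lt: "\<And>i j x y. i \<in> {1..d+1} \<Longrightarrow> j \<in> {1..d+1} \<Longrightarrow> i < j \<Longrightarrow> x \<in> blk d mm i \<Longrightarrow> y \<in> blk d mm j \<Longrightarrow> x < y"
  proof -
    fix i j x y assume i: "i \<in> {1..d+1}" and j: "j \<in> {1..d+1}" and ij: "i < j"
      and x: "x \<in> blk d mm i" and y: "y \<in> blk d mm j"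
    have i': "i \<in> {1..d}" using i j ij by auto
    then have x1: "x \<le> ?S i" using blkj x by auto
    show "x < y"
    proof (cases "j = d+1")
      case True then show ?thesis using y blkd1 x1 Smono[of i d] Sd i' by auto
    next
      case False
      then have j': "j \<in> {1..d}" using j by auto
      have "?S i \<le> (\<Sum>i\<in>{1..<j}. mm i)" by (rule sum_mono2) (use ij in auto)
      then show ?thesis using blkj[OF j'] y x1 by auto
    qed
  qed
  have blk_disj: "\<And>i j x. i \<in> {1..d+1} \<Longrightarrow> j \<in> {1..d+1} \<Longrightarrow> x \<in> blk d mm i \<Longrightarrow> x \<in> blk d mm j \<Longrightarrow> i = j"
    using blk_lt by (metis less_irrefl linorder_neqE_nat)
  have cover: "\<And>x. x \<in> ?V \<Longrightarrow> x \<notin> blk d mm 0 \<Longrightarrow> \<exists>j\<in>{1..d}. x \<in> blk d mm j"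
  proof -
    fix x assume x: "x \<in> ?V" "x \<notin> blk d mm 0"
    then have xS: "1 \<le> x" "x \<le> ?S d" using blk0 by auto
    define j where "j = (LEAST j. x \<le> ?S j)"
    have j1: "x \<le> ?S j" using LeastI[of "\<lambda>j. x \<le> ?S j" d] xS unfolding j_def by blast
    have jd: "j \<le> d" using Least_le[of "\<lambda>j. x \<le> ?S j" d] xS unfolding j_def by blast
    have j0: "j \<noteq> 0"
    proof
      assume "j = 0"
      then have "?S j = 0" by simp
      then show False using j1 xS by linarith
    qed
    then obtain j' where j': "j = Suc j'" by (cases j) auto
    have "\<not> x \<le> ?S j'" using not_less_Least[of j' "\<lambda>j. x \<le> ?S j"] j' unfolding j_def by auto
    moreover have "{1..<j} = {1..j'}" using j' by auto
    ultimately have "x \<in> blk d mm j" using blkj[of j] j1 j0 jd by auto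
    then show "\<exists>j\<in>{1..d}. x \<in> blk d mm j" using j0 jd by auto
  qed
  obtain w where Btw: "Bt = w ` ({1..d+1} - {k})" "\<forall>j\<in>{1..d+1}-{k}. w j \<in> blk d mm j"
    using Bt unfolding Bset_def by blast
  have injw: "inj_on w ({1..d+1}-{k})"
  proof (rule inj_onI)
    fix x y assume "x \<in> {1..d+1}-{k}" "y \<in> {1..d+1}-{k}" "w x = w y"
    then show "x = y" using blk_disj Btw(2) by (metis DiffD1)
  qed
  have "card ({1..d+1}-{k}) = d" using k by simp
  then have cardBt: "card Bt = d" using Btw card_image[OF injw] by simp
  have finBt: "finite Bt" using Btw by simp
  have cardB: "card ?B = d+1" using l cardBt finBt by simp
  have finB: "finite ?B" using finBt by simp
  have injjj: "inj_on jj {1..d}"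
  proof (rule inj_onI)
    fix x y assume "x \<in> {1..d}" "y \<in> {1..d}" "jj x = jj y"
    moreover have "\<And>z. z \<in> {1..d} \<Longrightarrow> z \<in> {1..d+1}" by auto
    ultimately show "x = y" using blk_disj[of x y "jj x"] jj_in by metis
  qed
  have nF: "?n+1 \<notin> jj ` {1..d}"
  proof
    assume "?n+1 \<in> jj ` {1..d}"
    then obtain r where r: "r \<in> {1..d}" "?n+1 = jj r" by blast
    then have "?n+1 \<le> ?S d" using blkj_le[of r "jj r"] jj_in by simp
    then show False using Sd by simp
  qed
  have cardF: "card ?F = d+1" unfolding Fset_def using card_image[OF injjj] nF by simp
  have finF: "finite ?F" unfolding Fset_def by simp
  have finV: "finite ?V" by simp
  have cardFB: "card ?F = card ?B" using cardF cardB by simp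
  have FV: "?F \<subseteq> ?V"
  proof
    fix x assume "x \<in> ?F"
    then consider "x = ?n+1" | r where "r \<in> {1..d}" "x = jj r" unfolding Fset_def by blast
    then show "x \<in> ?V"
    proof cases
      case 2
      then have "1 \<le> x \<and> x \<le> ?S d" using blkj_le[of r "jj r"] jj_in by simp
      then show ?thesis using Sd by simp
    qed simp
  qed
  have Bblk0: "?B \<inter> blk d mm 0 \<subseteq> {l, ?n+1}"
  proof
    fix x assume x: "x \<in> ?B \<inter> blk d mm 0"
    show "x \<in> {l, ?n+1}"
    proof (cases "x = l")
      case False
      then have "x \<in> Bt" using x by blast
      then obtain j where j: "j \<in> {1..d+1}-{k}" "x = w j" using Btw(1) by blast
      show ?thesis
      proof (cases "j = d+1")
        case True then show ?thesis using j Btw(2) blkd1 by auto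
      next
        case False
        then have "j \<in> {1..d}" using j by auto
        then show ?thesis using blkj_le[of j x] j Btw(2) x blk0 by auto
      qed
    qed simp
  qed
  have zT: "\<zeta> \<in> Theta ?V E s t ?B" using zeta unfolding ThetaF_def by blast
  have Ein: "\<And>e. e \<in> E \<Longrightarrow> s e \<in> ?V \<and> t e \<in> ?V" using graph unfolding multidigraph_def by blast
  have stay: "\<And>e. e \<in> E \<Longrightarrow> s e \<in> blk d mm 0 \<Longrightarrow> t e \<in> blk d mm 0"
  proof (rule ccontr)
    fix e assume e: "e \<in> E" "s e \<in> blk d mm 0" "t e \<notin> blk d mm 0"
    then obtain j where j: "j \<in> {1..d}" "t e \<in> blk d mm j" using cover Ein by blast
    have c: "\<forall>e\<in>E. \<forall>i\<in>{0..d}. \<forall>j\<in>{1..d}. i \<noteq> j \<longrightarrow> \<not> (s e \<in> blk d mm i \<and> t e \<in> blk d mm j)"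
      using compat unfolding A_compatible_def by blast
    have z: "0 \<in> {0..d}" "(0::nat) \<noteq> j" using j by auto
    show False using c[rule_format, OF e(1) z(1) j(1) z(2)] e(2) j(2) by blast
  qed
  have n1V: "?n+1 \<in> ?V" by simp
  have n1b: "?n+1 \<in> blk d mm 0" using blk0 Sd by simp
  have root0: "\<And>\<xi>. \<xi> \<in> Theta ?V E s t ?B \<Longrightarrow> groot ?V s t \<xi> (?n+1) \<in> blk d mm 0"
  proof -
    fix \<xi> assume xi: "\<xi> \<in> Theta ?V E s t ?B"
    have sub: "\<xi> \<subseteq> E" using xi unfolding Theta_def by blast
    show "groot ?V s t \<xi> (?n+1) \<in> blk d mm 0"
      by (rule root_closed[OF xi finV n1V n1b]) (use sub stay Ein in blast)
  qed
  have g_n1: "\<And>\<xi>. \<xi> \<in> Theta ?V E s t ?B \<Longrightarrow> groot ?V s t \<xi> (?n+1) = (if ?n+1 \<in> ?B then ?n+1 else l)"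
  proof -
    fix \<xi> assume xi: "\<xi> \<in> Theta ?V E s t ?B"
    show "groot ?V s t \<xi> (?n+1) = (if ?n+1 \<in> ?B then ?n+1 else l)"
    proof (cases "?n+1 \<in> ?B")
      case True then show ?thesis using Theta_groot_B[OF xi finV finB True] by simp
    next
      case False
      have "groot ?V s t \<xi> (?n+1) \<in> ?B" using Theta_root[OF xi n1V] by blast
      then show ?thesis using root0[OF xi] Bblk0 False by auto
    qed
  qed
  have distF: "\<And>f1 f2. f1 \<in> ?F \<Longrightarrow> f2 \<in> ?F \<Longrightarrow> comp ?V s t \<zeta> f1 = comp ?V s t \<zeta> f2 \<Longrightarrow> f1 = f2"
    using ThetaF_distinct[OF zeta finV finF cardFB] by blast
  have jjF: "\<And>r. r \<in> {1..d} \<Longrightarrow> jj r \<in> ?F" unfolding Fset_def by blast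
  have n1F: "?n+1 \<in> ?F" unfolding Fset_def by blast
  show ?thesis
  proof (intro conjI ballI allI impI)
    fix r i es assume r: "r \<in> {1..d}" and i: "i \<in> ?B" and p: "dpath s t \<zeta> (jj r) es i"
    show "set es \<inter> Eneg E \<pi> = {}"
    proof (rule ccontr)
      assume neg: "set es \<inter> Eneg E \<pi> \<noteq> {}"
      have iV: "i \<in> ?V"
      proof (cases "i = l")
        case False
        then have "i \<in> Bt" using i by blast
        then obtain j where j: "j \<in> {1..d+1}-{k}" "i = w j" using Btw(1) by blast
        show ?thesis
        proof (cases "j = d+1")
          case True
          have "w j \<in> blk d mm j" using Btw(2) j(1) by blast
          then show ?thesis using True j(2) blkd1 by simp
        next
          case False
          then have jd: "j \<in> {1..d}" using j by auto
          have "w j \<in> blk d mm j" using Btw(2) j(1) by blast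
          then have "1 \<le> i \<and> i \<le> ?S d" using blkj_le[OF jd] j(2) by simp
          then show ?thesis using Sd by simp
        qed
      qed (use l in auto)
      have sub: "\<zeta> \<subseteq> E" using zT unfolding Theta_def by blast
      have jV: "jj r \<in> ?V" using FV jjF r by blast
      have inpath: "?n+1 \<in> set (jj r # map t es)"
      proof (cases "i = ?n+1")
        case True
        show ?thesis
        proof (cases "es = []")
          case True then show ?thesis using p \<open>i = ?n+1\<close> unfolding dpath_def by simp
        next
          case False then have "t (last es) = i" using p unfolding dpath_def by simp
          moreover have "last es \<in> set es" using False by simp
          ultimately have "?n+1 \<in> set (map t es)" using \<open>i = ?n+1\<close> by force
          then show ?thesis by simp
        qed
      next
        case False
        then have "i \<in> {1..?n}" using iV by auto
        moreover have "dpath s t E (jj r) es i" using p sub unfolding dpath_def by auto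
        ultimately show ?thesis using star[rule_format, of i r es] r neg by blast
      qed
      have "set (jj r # map t es) \<subseteq> comp ?V s t \<zeta> (jj r)"
        by (rule dpath_comp[OF p jV]) (use sub Ein in blast)
      then have "?n+1 \<in> comp ?V s t \<zeta> (jj r)" using inpath by blast
      then have "comp ?V s t \<zeta> (?n+1) = comp ?V s t \<zeta> (jj r)" by (rule comp_eq)
      then have "?n+1 = jj r" using distF n1F jjF r by blast
      then show False using nF r by auto
    qed
  next
    fix \<zeta>' assume z': "\<zeta>' \<in> Theta ?V E s t ?B"
      and hyp: "\<forall>r\<in>{1..d}. groot ?V s t \<zeta>' (jj r) = groot ?V s t \<zeta> (jj r)"
    show eqn: "groot ?V s t \<zeta>' (?n+1) = groot ?V s t \<zeta> (?n+1)"
      using g_n1[OF z'] g_n1[OF zT] by simp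
    have geq: "\<And>f. f \<in> ?F \<Longrightarrow> groot ?V s t \<zeta>' f = groot ?V s t \<zeta> f"
      using hyp eqn unfolding Fset_def by blast
    let ?K = "components ?V s t \<zeta>'"
    let ?h = "\<lambda>f. comp ?V s t \<zeta>' f"
    have injh: "inj_on ?h ?F"
    proof (rule inj_onI)
      fix f1 f2 assume f: "f1 \<in> ?F" "f2 \<in> ?F" "?h f1 = ?h f2"
      have "groot ?V s t \<zeta>' f1 = groot ?V s t \<zeta>' f2" using f(3) unfolding groot_def by simp
      then have gg: "groot ?V s t \<zeta> f1 = groot ?V s t \<zeta> f2" using geq f by simp
      have "groot ?V s t \<zeta> f1 \<in> comp ?V s t \<zeta> f1" using Theta_root[OF zT] f FV by blast
      moreover have "groot ?V s t \<zeta> f2 \<in> comp ?V s t \<zeta> f2" using Theta_root[OF zT] f FV by blast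
      ultimately have "comp ?V s t \<zeta> f1 = comp ?V s t \<zeta> f2" using gg comp_eq by metis
      then show "f1 = f2" using distF f by blast
    qed
    have hK: "?h ` ?F \<subseteq> ?K" using FV unfolding components_def by blast
    have finK: "finite ?K" unfolding components_def by simp
    have "card (?h ` ?F) = card ?K" using card_image[OF injh] cardFB z' unfolding Theta_def by simp
    then have hK2: "?h ` ?F = ?K" using hK finK by (simp add: card_subset_eq)
    have "\<forall>C\<in>?K. C \<inter> ?F \<noteq> {}"
    proof
      fix C assume "C \<in> ?K"
      then obtain f where f: "f \<in> ?F" "C = ?h f" using hK2 by auto
      then have "f \<in> C" using comp_self FV by blast
      then show "C \<inter> ?F \<noteq> {}" using f by blast
    qed
    then show "\<zeta>' \<in> ThetaF ?V E s t ?F ?B" using z' unfolding ThetaF_def by blast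
  qed
qed

end
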